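(* Let $\underline{\mathbb{G}}=(\mathbb{G},\mathcal{V},\omega_{\mathcal{V}},\mathcal{F},\omega_{\mathcal{F}})$ be a packaged ribbon graph and suppose its dual is $\underline{\mathbb{G}}^*=(\mathbb{G}^*,\mathcal{V}^*,\omega_{\mathcal{V}^*},\mathcal{F}^*,\omega_{\mathcal{F}^*})$. Then $q_\Gamma(\underline{\mathbb{G}}_\mathcal{V}) = p_\Gamma(\underline{\mathbb{G}}^*_{\mathcal{F}^*})$ and $p_\Gamma(\underline{\mathbb{G}}_{\mathcal{F}}) = q_\Gamma(\underline{\mathbb{G}}^*_{\mathcal{V}^*})$.
   Context: A packaged ribbon graph is a tuple $\underline{\mathbb{G}}=(\mathbb{G},\mathcal{V},\omega_{\mathcal{V}},\mathcal{F},\omega_{\mathcal{F}})$ where $\mathbb{G}=(V,E)$ is an orientable ribbon graph with set of boundary components $F$, $\mathcal{V}$ is a partition of $V$, $\mathcal{F}$ is a partition of $F$, and $\omega_{\mathcal{V}}:\mathcal{V}\to\mathbb{N}_0$, $\omega_{\mathcal{F}}:\mathcal{F}\to\mathbb{N}_0$ are weightings of the blocks. The dual $\underline{\mathbb{G}}^*$ has underlying ribbon graph the geometric dual $\mathbb{G}^*$; since vertices of $\mathbb{G}$ correspond to boundary components of $\mathbb{G}^*$ and boundary components of $\mathbb{G}$ correspond to vertices of $\mathbb{G}^*$, the vertex partition/weighting $\mathcal{V}^*,\omega_{\mathcal{V}^*}$ of $\underline{\mathbb{G}}^*$ is induced by $\mathcal{F},\omega_{\mathcal{F}}$, and the boundary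 partition/weighting $\mathcal{F}^*,\omega_{\mathcal{F}^*}$ is induced by $\mathcal{V},\omega_{\mathcal{V}}$. The packaging $G(\mathbb{G};\mathcal{V})$ is the graph with vertex set $\mathcal{V}$ (weighted by $\omega_{\mathcal{V}}$) and an edge $([u],[v])$ for each edge $(u,v)$ of $\mathbb{G}$, where $[v]$ denotes the block of $v$. For a subgraph $K$ of $G(\mathbb{G};\mathcal{V})$, $\mathbb{G}[K]$ is the ribbon subgraph of $\mathbb{G}$ consisting of all vertices of $\mathbb{G}$ lying in blocks that are vertices of $K$ and the edges of $\mathbb{G}$ corresponding to edges of $K$; $\omega_{\mathcal{V}}(K)=\sum_{[v]\in V(K)}\omega_{\mathcal{V}}([v])$. The packaging $G(\mathbb{G}^*;\mathcal{F})$ is defined analogously using $\mathbb{G}^*$ and the partition $\mathcal{F}$ of its vertices. Write $\underline{\mathbb{G}}_\mathcal{V}:=(\mathbb{G},\mathcal{V},\omega_{\mathcal{V}})$ and $\underline{\mathbb{G}}_\mathcal{F}:=(\mathbb{G},\mathcal{F},\omega_{\mathcal{F}})$. For a subgraph $K$ of $G(\mathbb{G};\mathcal{V})$, $\underline{\mathbb{G}}_\mathcal{V}[K]:=(\mathbb{G}[K],\mathcal{V}',\omega_{\mathcal{V}}')$ with $\mathcal{V}',\omega_{\mathcal{V}}'$ the restrictions of $\mathcal{V},\omega_{\mathcal{V}}$. For a subgraph $H$ of $G(\mathbb{G}^*;\mathcal{F})$, $\underline{\mathbb{G}}_\mathcal{F}[H]:=((\mathbb{G}^*[H])^*,\mathcal{F}',\omega_{\mathcal{F}}')$,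 where boundary components of $(\mathbb{G}^*[H])^*$ correspond naturally to boundary components of $\mathbb{G}$ and $\mathcal{F}',\omega_{\mathcal{F}}'$ are the restrictions of $\mathcal{F},\omega_{\mathcal{F}}$ under this correspondence. For $A\subseteq E$, $(\underline{\mathbb{G}}|A)_\mathcal{V}$ is $(\mathbb{G}|A,\mathcal{V},\omega_{\mathcal{V}})$ (deleting edges does not change the vertex partition or its weights), and $(\underline{\mathbb{G}}/A^c)_\mathcal{F}$ is $\mathbb{G}/A^c$ (contraction of the edges $A^c=E\setminus A$) with boundary partition and weights carried over from $\mathcal{F},\omega_{\mathcal{F}}$ via the natural correspondence between boundary components of $\mathbb{G}$ and of $\mathbb{G}/A^c$. Let $\Gamma$ be a finite group whose irreducible representations have dimensions $n_1,\dots,n_k$; $v,e,f$ denote numbers of vertices, edges and boundary components, and $\omega_{\mathcal{V}}(\mathbb{G})$, $\omega_{\mathcal{F}}(\mathbb{G})$ total block weights. If $G(\mathbb{G};\mathcal{V})$ is connected, $q_\Gamma^1(\underline{\mathbb{G}}_\mathcal{V}):=|\Gamma|^{e(\mathbb{G})-|\mathcal{V}|}\sum_{k} n_{k}^{f(\mathbb{G})-e(\mathbb{G})+|\mathcal{V}|-\omega_{\mathcal{V}}(\mathbb{G})}$; otherwise $q_\Gamma^1(\underline{\mathbb{G}}_\mathcal{V}):=\prod_{K} q_\Gamma^1(\underline{\mathbb{G}}_\mathcal{V}[K])$ over the connected components $K$ of $G(\mathbb{G};\mathcal{V})$; and $q_\Gamma(\underline{\mathbb{G}}_\mathcal{V}):=\sum_{A\subseteq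 E}(-1)^{|A^c|}q_\Gamma^1((\underline{\mathbb{G}}|A)_\mathcal{V})$. If $G(\mathbb{G}^*;\mathcal{F})$ is connected, $p_\Gamma^1(\underline{\mathbb{G}}_\mathcal{F}):=|\Gamma|^{e(\mathbb{G})-|\mathcal{F}|}\sum_{k} n_{k}^{v(\mathbb{G})-e(\mathbb{G})+|\mathcal{F}|-\omega_{\mathcal{F}}(\mathbb{G})}$; otherwise $p_\Gamma^1(\underline{\mathbb{G}}_\mathcal{F}):=\prod_{H} p_\Gamma^1(\underline{\mathbb{G}}_\mathcal{F}[H])$ over the connected components $H$ of $G(\mathbb{G}^*;\mathcal{F})$; and $p_\Gamma(\underline{\mathbb{G}}_\mathcal{F}):=\sum_{A\subseteq E}(-1)^{|A^c|}p_\Gamma^1((\underline{\mathbb{G}}/A^c)_\mathcal{F})$. *)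

theory Defs
  imports Complex_Main "HOL-Combinatorics.Permutations" "HOL-Combinatorics.Orbits"
          "HOL-Library.Disjoint_Sets"
begin

text \<open>A ribbon graph is given by a finite set of darts (half-edges), a fixed-point-free
involution alp (the two darts of an edge), a permutation sig (cyclic order of darts around
each vertex), a set of vertex labels and a set of boundary-component labels.  Vertices with
darts are the sig-orbits, boundary components with darts are the orbits of phi = sig o alp.
Isolated vertices (no darts) are allowed; each of them has exactly one boundary component,
given by the bijection iso.  This models exactly orientable ribbon graphs.\<close>

record ('d,'v,'f) rg =
  darts :: "'d set"
  alp   :: "'d \<Rightarrow> 'd"
  sig   :: "'d \<Rightarrow> 'd"
  verts :: "'v set"
  faces :: "'f set"
  vt    :: "'d \<Rightarrow> 'v"
  fc    :: "'d \<Rightarrow> 'f"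
  iso   :: "'v \<Rightarrow> 'f"

definition phi :: "('d,'v,'f) rg \<Rightarrow> 'd \<Rightarrow> 'd" where
  "phi G = sig G \<circ> alp G"

definition ribbon_graph :: "('d,'v,'f) rg \<Rightarrow> bool" where
  "ribbon_graph G \<longleftrightarrow>
     finite (darts G) \<and> finite (verts G) \<and> finite (faces G) \<and>
     alp G permutes darts G \<and> (\<forall>d\<in>darts G. alp G (alp G d) = d \<and> alp G d \<noteq> d) \<and>
     sig G permutes darts G \<and>
     (\<forall>d\<in>darts G. vt G d \<in> verts G) \<and>
     (\<forall>d\<in>darts G. \<forall>d'\<in>darts G. vt G d = vt G d' \<longleftrightarrow> d' \<in> orbit (sig G) d) \<and>
     (\<forall>d\<in>darts G. fc G d \<in> faces G) \<and>
     (\<forall>d\<in>darts G. \<forall>d'\<in>darts G. fc G d = fc G d' \<longleftrightarrow> d' \<in> orbit (phi G) d) \<and>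
     bij_betw (iso G) (verts G - vt G ` darts G) (faces G - fc G ` darts G)"

definition edges :: "('d,'v,'f) rg \<Rightarrow> 'd set set" where
  "edges G = {{d, alp G d} | d. d \<in> darts G}"

definition first_return :: "('d \<Rightarrow> 'd) \<Rightarrow> 'd set \<Rightarrow> 'd \<Rightarrow> 'd" where
  "first_return f S d =
     (if d \<in> S then (f ^^ (LEAST k. 0 < k \<and> (f ^^ k) d \<in> S)) d else d)"

definition restr :: "('d \<Rightarrow> 'd) \<Rightarrow> 'd set \<Rightarrow> 'd \<Rightarrow> 'd" where
  "restr f S d = (if d \<in> S then f d else d)"

definition dual :: "('d,'v,'f) rg \<Rightarrow> ('d,'f,'v) rg" where
  "dual G = \<lparr> darts = darts G, alp = alp G, sig = phi G,
              verts = faces G, faces = verts G, vt = fc G, fc = vt G,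
              iso = inv_into (verts G - vt G ` darts G) (iso G) \<rparr>"

text \<open>Ribbon subgraph with vertex set W and edge set A (edges of G with ends in W).\<close>
definition sub :: "('d,'v,'f) rg \<Rightarrow> 'v set \<Rightarrow> 'd set set \<Rightarrow> ('d,'v,'d set + 'v) rg" where
  "sub G W A =
     (let S = \<Union>A; s' = first_return (sig G) S; a' = restr (alp G) S in
      \<lparr> darts = S, alp = a', sig = s', verts = W,
        faces = {Inl (orbit (s' \<circ> a') d) | d. d \<in> S} \<union> Inr ` (W - vt G ` S),
        vt = vt G, fc = (\<lambda>d. Inl (orbit (s' \<circ> a') d)), iso = Inr \<rparr>)"

definition del :: "('d,'v,'f) rg \<Rightarrow> 'd set set \<Rightarrow> ('d,'v,'d set + 'v) rg" where
  "del G A = sub G (verts G) A"   (* G|A: keep the edges A, delete the others *)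

text \<open>Contraction G/B of a set B of edges, G/B = (G^B) - B with G^B the partial dual.
 In the combinatorial-map model G^B has vertex rotation sig o alp_B (alp_B = alp on the darts
 of B, identity elsewhere); deleting the darts of B gives the rotation below.\<close>
definition contract :: "('d,'v,'f) rg \<Rightarrow> 'd set set \<Rightarrow> ('d,'d set + 'f,'f) rg" where
  "contract G B =
     (let S = darts G - \<Union>B; s' = first_return (sig G \<circ> restr (alp G) (\<Union>B)) S;
          a' = restr (alp G) S in
      \<lparr> darts = S, alp = a', sig = s',
        verts = {Inl (orbit s' d) | d. d \<in> S} \<union> Inr ` (faces G - fc G ` S),
        faces = faces G,
        vt = (\<lambda>d. Inl (orbit s' d)), fc = fc G,
        iso = case_sum (\<lambda>_. undefined) id \<rparr>)"

definition blk :: "'v set set \<Rightarrow> 'v \<Rightarrow> 'v set" where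
  "blk P v = (THE b. b \<in> P \<and> v \<in> b)"

definition pk_adj :: "('d,'v,'f) rg \<Rightarrow> 'v set set \<Rightarrow> ('v set \<times> 'v set) set" where
  "pk_adj G P = {(blk P (vt G d), blk P (vt G (alp G d))) | d. d \<in> darts G}"

definition pk_comps :: "('d,'v,'f) rg \<Rightarrow> 'v set set \<Rightarrow> 'v set set set" where
  "pk_comps G P = {{b' \<in> P. (b, b') \<in> (pk_adj G P)\<^sup>*} | b. b \<in> P}"

definition pk_connected :: "('d,'v,'f) rg \<Rightarrow> 'v set set \<Rightarrow> bool" where
  "pk_connected G P \<longleftrightarrow> pk_comps G P = {P}"

definition comp_edges :: "('d,'v,'f) rg \<Rightarrow> 'v set set \<Rightarrow> 'v set set \<Rightarrow> 'd set set" where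
  "comp_edges G P K = {e \<in> edges G. \<exists>d\<in>e. blk P (vt G d) \<in> K}"

section \<open>The invariants q and p (Gamma given by its order gam and irrep dimensions ns)\<close>

definition q1conn :: "real \<Rightarrow> nat list \<Rightarrow> ('d,'v,'f) rg \<Rightarrow> 'v set set \<Rightarrow> ('v set \<Rightarrow> nat) \<Rightarrow> real" where
  "q1conn gam ns G P w =
     gam powi (int (card (edges G)) - int (card P)) *
     sum_list (map (\<lambda>n. real n powi (int (card (faces G)) - int (card (edges G))
                                       + int (card P) - int (\<Sum>b\<in>P. w b))) ns)"

definition q1 :: "real \<Rightarrow> nat list \<Rightarrow> ('d,'v,'f) rg \<Rightarrow> 'v set set \<Rightarrow> ('v set \<Rightarrow> nat) \<Rightarrow> real" where
  "q1 gam ns G P w =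
     (if pk_connected G P then q1conn gam ns G P w
      else (\<Prod>K\<in>pk_comps G P. q1conn gam ns (sub G (\<Union>K) (comp_edges G P K)) K w))"

definition q :: "real \<Rightarrow> nat list \<Rightarrow> ('d,'v,'f) rg \<Rightarrow> 'v set set \<Rightarrow> ('v set \<Rightarrow> nat) \<Rightarrow> real" where
  "q gam ns G P w =
     (\<Sum>A\<in>Pow (edges G). (-1) ^ card (edges G - A) * q1 gam ns (del G A) P w)"

definition p1conn :: "real \<Rightarrow> nat list \<Rightarrow> ('d,'v,'f) rg \<Rightarrow> 'f set set \<Rightarrow> ('f set \<Rightarrow> nat) \<Rightarrow> real" where
  "p1conn gam ns G P w =
     gam powi (int (card (edges G)) - int (card P)) *
     sum_list (map (\<lambda>n. real n powi (int (card (verts G)) - int (card (edges G))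
                                       + int (card P) - int (\<Sum>b\<in>P. w b))) ns)"

text \<open>Here P partitions the boundary components of G, i.e. the vertices of dual G; the
 packaging is G(G^*;P), and G_P[H] = ((G^*[H])^*, restricted P, w).\<close>
definition p1 :: "real \<Rightarrow> nat list \<Rightarrow> ('d,'v,'f) rg \<Rightarrow> 'f set set \<Rightarrow> ('f set \<Rightarrow> nat) \<Rightarrow> real" where
  "p1 gam ns G P w =
     (if pk_connected (dual G) P then p1conn gam ns G P w
      else (\<Prod>H\<in>pk_comps (dual G) P.
              p1conn gam ns (dual (sub (dual G) (\<Union>H) (comp_edges (dual G) P H))) H w))"

definition p :: "real \<Rightarrow> nat list \<Rightarrow> ('d,'v,'f) rg \<Rightarrow> 'f set set \<Rightarrow> ('f set \<Rightarrow> nat) \<Rightarrow> real" where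
  "p gam ns G P w =
     (\<Sum>A\<in>Pow (edges G). (-1) ^ card (edges G - A) * p1 gam ns (contract G (edges G - A)) P w)"

end

theory Submission
  imports Defs
begin

lemma edges_cong: "darts G = darts H \<Longrightarrow> alp G = alp H \<Longrightarrow> edges G = edges H"
  unfolding edges_def by simp

lemma pk_adj_cong: "darts G = darts H \<Longrightarrow> alp G = alp H \<Longrightarrow> vt G = vt H \<Longrightarrow> pk_adj G P = pk_adj H P"
  unfolding pk_adj_def by simp

lemma pk_comps_cong:
  assumes "darts G = darts H" "alp G = alp H" "vt G = vt H"
  shows "pk_comps G P = pk_comps H P"
  unfolding pk_comps_def pk_adj_cong[OF assms] ..

lemma pk_connected_cong:
  assumes "darts G = darts H" "alp G = alp H" "vt G = vt H"
  shows "pk_connected G P = pk_connected H P"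
  unfolding pk_connected_def pk_comps_cong[OF assms] ..

lemma comp_edges_cong:
  assumes "darts G = darts H" "alp G = alp H" "vt G = vt H"
  shows "comp_edges G P K = comp_edges H P K"
  unfolding comp_edges_def edges_cong[OF assms(1,2)] assms(3) ..

lemma sub_cong: "alp G = alp H \<Longrightarrow> sig G = sig H \<Longrightarrow> vt G = vt H \<Longrightarrow> sub G W X = sub H W X"
  unfolding sub_def by simp

lemma p1conn_dual: "p1conn gam ns (dual X) H w = q1conn gam ns X H w"
proof -
  have "edges (dual X) = edges X" by (rule edges_cong) (simp_all add: dual_def)
  then show ?thesis unfolding p1conn_def q1conn_def by (simp add: dual_def)
qed

lemma funpow_agree:
  assumes hS: "\<And>x. x \<notin> S \<Longrightarrow> h x = s x" and hd: "h d = s a"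
  shows "0 < k \<Longrightarrow> (\<forall>j. 0 < j \<and> j < k \<longrightarrow> (s ^^ j) a \<notin> S) \<Longrightarrow> (h ^^ k) d = (s ^^ k) a"
proof (induction k)
  case 0 then show ?case by simp
next
  case (Suc k)
  show ?case
  proof (cases k)
    case 0 then show ?thesis using hd by simp
  next
    case (Suc m)
    then have "(h ^^ k) d = (s ^^ k) a" using Suc.IH Suc.prems by auto
    moreover have "(s ^^ k) a \<notin> S" using Suc.prems \<open>k = Suc m\<close> by auto
    ultimately show ?thesis using hS by simp
  qed
qed

lemma first_return_agree:
  assumes hS: "\<And>x. x \<notin> S \<Longrightarrow> h x = s x" and hd: "h d = s a"
    and ex: "\<exists>k>0. (s ^^ k) a \<in> S"
  shows "(h ^^ (LEAST k. 0 < k \<and> (h ^^ k) d \<in> S)) d = (s ^^ (LEAST k. 0 < k \<and> (s ^^ k) a \<in> S)) a"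
proof -
  define m where "m = (LEAST k. 0 < k \<and> (s ^^ k) a \<in> S)"
  have Pm: "0 < m \<and> (s ^^ m) a \<in> S" unfolding m_def using ex by (metis (mono_tags, lifting) LeastI)
  have nb: "\<forall>j. 0 < j \<and> j < m \<longrightarrow> (s ^^ j) a \<notin> S"
    unfolding m_def using not_less_Least by blast
  have eqm: "(h ^^ m) d = (s ^^ m) a" using funpow_agree[OF hS hd] Pm nb by blast
  have "(LEAST k. 0 < k \<and> (h ^^ k) d \<in> S) = m"
  proof (rule Least_equality)
    show "0 < m \<and> (h ^^ m) d \<in> S" using Pm eqm by simp
  next
    fix y assume y: "0 < y \<and> (h ^^ y) d \<in> S"
    show "m \<le> y"
    proof (rule ccontr)
      assume "\<not> m \<le> y"
      then have "y < m" by simp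
      then have "(h ^^ y) d = (s ^^ y) a" using y nb by (intro funpow_agree[OF hS hd]) auto
      then show False using nb y \<open>y < m\<close> by auto
    qed
  qed
  then show ?thesis using eqm m_def by simp
qed


lemma edges_sub_darts:
  assumes ap: "alp G permutes darts G" and e: "e \<in> edges G"
  shows "e \<subseteq> darts G"
  using e ap unfolding edges_def by (auto simp: permutes_in_image)

lemma edge_eq:
  assumes "d \<in> darts G" "\<forall>d\<in>darts G. alp G (alp G d) = d" "x \<in> {d, alp G d}"
  shows "{d, alp G d} = {x, alp G x}"
  using assms by auto

lemma final_step:
  fixes D :: "('d,'v,'e) rg" and C :: "('d,'f,'v) rg"
  assumes conn: "pk_connected (dual C) P = pk_connected D P"
   and comps: "pk_comps (dual C) P = pk_comps D P"
   and ce: "\<And>K. comp_edges (dual C) P K = comp_edges D P K"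
   and sb: "\<And>W X. sub (dual C) W X = sub D W X"
   and c1: "p1conn gam ns C P w = q1conn gam ns D P w"
  shows "q1 gam ns D P w = p1 gam ns C P w"
  unfolding q1_def p1_def
  by (simp only: conn comps ce sb c1 p1conn_dual)

lemma edges_memE:
  assumes "e \<in> edges G" obtains d where "d \<in> darts G" "e = {d, alp G d}"
  using assms unfolding edges_def by blast

lemma key:
  assumes fin: "finite (darts G)" and ap: "alp G permutes darts G"
    and inv: "\<forall>d\<in>darts G. alp G (alp G d) = d" and sp: "sig G permutes darts G"
    and A: "A \<subseteq> edges G"
  shows "q1 gam ns (del G A) P w = p1 gam ns (contract (dual G) (edges G - A)) P w"
proof -
  define S where "S = \<Union>A"
  define T where "T = \<Union>(edges G - A)"
  have Sd: "S \<subseteq> darts G" using A edges_sub_darts[OF ap] unfolding S_def by blast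
  have Sc: "alp G x \<in> S" if "x \<in> S" for x
  proof -
    from that obtain e where eA: "e \<in> A" and xe: "x \<in> e" unfolding S_def by blast
    have "e \<in> edges G" using A eA by blast
    then obtain d where ed: "d \<in> darts G" "e = {d, alp G d}" by (rule edges_memE)
    have "e = {x, alp G x}" using edge_eq[OF ed(1) inv] xe ed(2) by simp
    then have "alp G x \<in> e" by simp
    then show ?thesis using eA unfolding S_def by blast
  qed
  have Seq: "darts G - T = S"
  proof
    show "darts G - T \<subseteq> S"
    proof
      fix x assume x: "x \<in> darts G - T"
      have "{x, alp G x} \<in> edges G" using x unfolding edges_def by blast
      moreover have "x \<notin> T" using x by blast
      then have "{x, alp G x} \<notin> edges G - A" unfolding T_def by blast
      ultimately have "{x, alp G x} \<in> A" by blast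
      then show "x \<in> S" unfolding S_def by blast
    qed
  next
    show "S \<subseteq> darts G - T"
    proof
      fix x assume x: "x \<in> S"
      then obtain e where e: "e \<in> A" "x \<in> e" unfolding S_def by blast
      have "e \<in> edges G" using A e by blast
      then obtain d where ed: "d \<in> darts G" "e = {d, alp G d}" by (rule edges_memE)
      have "x \<notin> T"
      proof
        assume "x \<in> T"
        then obtain e' where e': "e' \<in> edges G - A" "x \<in> e'" unfolding T_def by blast
        then have "e' \<in> edges G" by blast
        then obtain d' where ed': "d' \<in> darts G" "e' = {d', alp G d'}" by (rule edges_memE)
        have "e = {x, alp G x}" using edge_eq[OF ed(1) inv] e(2) ed(2) by simp
        moreover have "e' = {x, alp G x}" using edge_eq[OF ed'(1) inv] e'(2) ed'(2) by simp
        ultimately have "e = e'" by simp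
        then show False using e e' by blast
      qed
      then show "x \<in> darts G - T" using x Sd by blast
    qed
  qed
  define C where "C = contract (dual G) (edges G - A)"
  define D where "D = del G A"
  have C1: "darts C = S" "alp C = restr (alp G) S" "faces C = verts G" "fc C = vt G"
    "sig C = first_return (phi G \<circ> restr (alp G) T) S"
    "verts C = {Inl (orbit (sig C) d) | d. d \<in> S} \<union> Inr ` (verts G - vt G ` S)"
    by (simp_all add: C_def contract_def Let_def dual_def Seq[unfolded T_def] T_def)
  have D1: "darts D = S" "alp D = restr (alp G) S" "sig D = first_return (sig G) S"
    "verts D = verts G" "vt D = vt G"
    "faces D = {Inl (orbit (sig D \<circ> alp D) d) | d. d \<in> S} \<union> Inr ` (verts G - vt G ` S)"
    by (simp_all add: D_def del_def sub_def Let_def S_def)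
  have perm: "permutation (sig G)" using fin sp permutation_permutes by blast
  have sigC: "sig C = sig D \<circ> alp D"
  proof
    fix x
    show "sig C x = (sig D \<circ> alp D) x"
    proof (cases "x \<in> S")
      case False
      then show ?thesis using C1 D1 by (simp add: first_return_def restr_def)
    next
      case True
      let ?h = "phi G \<circ> restr (alp G) T"
      have hS: "?h y = sig G y" if "y \<notin> S" for y
      proof (cases "y \<in> T")
        case True
        then have "y \<in> darts G" unfolding T_def using edges_sub_darts[OF ap] by blast
        then show ?thesis using True inv by (simp add: phi_def restr_def)
      next
        case False
        then have "y \<notin> darts G" using Seq that by blast
        then show ?thesis using False ap by (simp add: phi_def restr_def permutes_not_in)
      qed
      have xT: "x \<notin> T" using True Seq by blast
      have hd: "?h x = sig G (alp G x)" using xT by (simp add: phi_def restr_def)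
      obtain n where n: "n > 0" "(sig G ^^ n) (alp G x) = alp G x"
        using permutation_self[OF perm] by metis
      have ex: "\<exists>k>0. (sig G ^^ k) (alp G x) \<in> S" using n Sc[OF True] by auto
      have "alp G x \<in> S" using Sc[OF True] .
      have l: "sig C x = (?h ^^ (LEAST k. 0 < k \<and> (?h ^^ k) x \<in> S)) x"
        using True by (simp only: C1 first_return_def if_True)
      have r: "(sig D \<circ> alp D) x = (sig G ^^ (LEAST k. 0 < k \<and> (sig G ^^ k) (alp G x) \<in> S)) (alp G x)"
        using True \<open>alp G x \<in> S\<close> by (simp add: D1 first_return_def restr_def)
      show ?thesis unfolding l r by (rule first_return_agree[OF hS hd ex])
    qed
  qed
  have aa: "alp D \<circ> alp D = id"
  proof
    fix x show "(alp D \<circ> alp D) x = id x"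
      using D1 Sc Sd inv by (auto simp: restr_def)
  qed
  have sdc: "sig (dual C) = sig D"
  proof -
    have "sig (dual C) = sig C \<circ> alp C" by (simp add: dual_def phi_def)
    also have "\<dots> = sig D \<circ> (alp D \<circ> alp D)" unfolding sigC using C1(2) D1(2) by (simp add: comp_assoc)
    also have "\<dots> = sig D" using aa by simp
    finally show ?thesis .
  qed
  have dC: "darts (dual C) = darts D" "alp (dual C) = alp D" "vt (dual C) = vt D"
    "sig (dual C) = sig D"
    using C1 D1 sdc by (simp_all add: dual_def)
  have vf: "verts C = faces D" using C1 D1 sigC by simp
  have eCD: "edges C = edges D" by (rule edges_cong) (simp_all add: C1 D1)
  have conn: "pk_connected (dual C) P = pk_connected D P" by (rule pk_connected_cong) (simp_all add: dC)
  have comps: "pk_comps (dual C) P = pk_comps D P" by (rule pk_comps_cong) (simp_all add: dC)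
  have ce: "comp_edges (dual C) P K = comp_edges D P K" for K by (rule comp_edges_cong) (simp_all add: dC)
  have sb: "sub (dual C) W X = sub D W X" for W X by (rule sub_cong) (simp_all add: dC)
  have c1: "p1conn gam ns C P w = q1conn gam ns D P w"
    unfolding p1conn_def q1conn_def using eCD vf by simp
  have "q1 gam ns D P w = p1 gam ns C P w"
    by (rule final_step[OF conn comps ce sb c1])
  then show ?thesis unfolding C_def D_def .
qed


lemma contract_cong:
  assumes "darts G = darts H" "alp G = alp H" "sig G = sig H" "faces G = faces H" "fc G = fc H"
  shows "contract G B = contract H B"
  unfolding contract_def Let_def assms ..

lemma q_eq_p_dual:
  assumes fin: "finite (darts G)" and ap: "alp G permutes darts G"
    and inv: "\<forall>d\<in>darts G. alp G (alp G d) = d" and sp: "sig G permutes darts G"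
  shows "q gam ns G P w = p gam ns (dual G) P w"
proof -
  have e: "edges (dual G) = edges G" by (rule edges_cong) (simp_all add: dual_def)
  show ?thesis unfolding q_def p_def e
  proof (rule sum.cong[OF refl])
    fix A assume "A \<in> Pow (edges G)"
    then have "A \<subseteq> edges G" by simp
    from key[OF fin ap inv sp this]
    show "(- 1) ^ card (edges G - A) * q1 gam ns (del G A) P w =
         (- 1) ^ card (edges G - A) * p1 gam ns (contract (dual G) (edges G - A)) P w"
      by simp
  qed
qed

theorem lemma5p3:
  fixes G :: "('d,'v,'f) rg"
    and PV :: "'v set set" and wV :: "'v set \<Rightarrow> nat"
    and PF :: "'f set set" and wF :: "'f set \<Rightarrow> nat"
    and gam :: real and ns :: "nat list"
  assumes "ribbon_graph G"
    and "partition_on (verts G) PV"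
    and "partition_on (faces G) PF"
    and "ns \<noteq> []" and "\<forall>n\<in>set ns. 0 < n" and "1 \<in> set ns"
    and "gam = real (\<Sum>n\<leftarrow>ns. n ^ 2)"
  shows "q gam ns G PV wV = p gam ns (dual G) PV wV
       \<and> p gam ns G PF wF = q gam ns (dual G) PF wF"
proof -
  have fin: "finite (darts G)" and ap: "alp G permutes darts G"
    and inv: "\<forall>d\<in>darts G. alp G (alp G d) = d" and sp: "sig G permutes darts G"
    using assms(1) unfolding ribbon_graph_def by auto
  have 1: "q gam ns G PV wV = p gam ns (dual G) PV wV" using q_eq_p_dual[OF fin ap inv sp] .
  have dd: "darts (dual G) = darts G" "alp (dual G) = alp G" "sig (dual G) = sig G \<circ> alp G"
    by (simp_all add: dual_def phi_def)
  have sp': "sig (dual G) permutes darts (dual G)"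
    unfolding dd using permutes_compose[OF ap sp] .
  have fin': "finite (darts (dual G))" and ap': "alp (dual G) permutes darts (dual G)"
    and inv': "\<forall>d\<in>darts (dual G). alp (dual G) (alp (dual G) d) = d"
    unfolding dd using fin ap inv by auto
  have 2: "q gam ns (dual G) PF wF = p gam ns (dual (dual G)) PF wF"
    using q_eq_p_dual[OF fin' ap' inv' sp'] .
  have ph: "sig (dual (dual G)) = sig G"
  proof
    fix x
    have "sig (dual (dual G)) x = sig G (alp G (alp G x))"
      by (simp add: dual_def phi_def)
    also have "\<dots> = sig G x"
      using inv ap by (cases "x \<in> darts G") (simp_all add: permutes_not_in)
    finally show "sig (dual (dual G)) x = sig G x" .
  qed
  have cc: "contract (dual (dual G)) B = contract G B" for B
    by (rule contract_cong) (simp_all add: ph, simp_all add: dual_def)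
  have e: "edges (dual (dual G)) = edges G" by (rule edges_cong) (simp_all add: dual_def)
  have 3: "p gam ns (dual (dual G)) PF wF = p gam ns G PF wF"
    unfolding p_def e cc ..
  show ?thesis using 1 2 3 by simp
qed

end
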